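(* Let $n$ be a positive integer, let $\alpha$ be a real number with $\frac{1}{2} \le \alpha < 1$, and let $\beta = 1-\alpha$. Suppose that $\frac{t_1}{A_1}, \frac{t_2}{A_2}, \dots, \frac{t_{n+1}}{A_{n+1}}$ are rational numbers, each of which is an $(n+3)$-bit underapproximation to $\beta$. Then the rational number \[ 1+\frac{t_1}{A_1}+\frac{t_1t_2}{A_1A_2}+\cdots+\prod_{i=1}^{n+1}\frac{t_i}{A_i} \] is an $n$-bit underapproximation to $\frac{1}{\alpha}$.
   Context: For a real number $\alpha$ and a positive integer $k$, a rational number $\alpha'$ is called a $k$-bit underapproximation to $\alpha$ if $0 \le \alpha - \alpha' \le \frac{1}{2^k}$. *)

theory Defs
  imports Complex_Main
begin

definition underapprox :: "nat \<Rightarrow> rat \<Rightarrow> real \<Rightarrow> bool" where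
  "underapprox k a' a \<longleftrightarrow> 0 \<le> a - of_rat a' \<and> a - of_rat a' \<le> 1 / 2 ^ k"

end

theory Submission
  imports Defs
begin

fun H :: "nat \<Rightarrow> (nat \<Rightarrow> real) \<Rightarrow> nat \<Rightarrow> real" where
  "H 0 q j = 1"
| "H (Suc m) q j = 1 + q j * H m q (Suc j)"

lemma H_sum: "H m q j = (\<Sum>k = 0..m. \<Prod>i = j..<j+k. q i)"
proof (induction m arbitrary: j)
  case 0 then show ?case by simp
next
  case (Suc m)
  have "(\<Sum>k = 0..Suc m. \<Prod>i = j..<j+k. q i)
      = 1 + (\<Sum>k = 0..m. \<Prod>i = j..<j+Suc k. q i)"
    by (subst sum.atLeast0_atMost_Suc_shift) simp
  also have "(\<Sum>k = 0..m. \<Prod>i = j..<j+Suc k. q i) = (\<Sum>k = 0..m. q j * (\<Prod>i = Suc j..<Suc j+k. q i))"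
    by (intro sum.cong refl, subst prod.atLeast_Suc_lessThan) auto
  finally show ?case using Suc by (simp add: sum_distrib_left)
qed

lemma H_bound:
  assumes a1: "1/2 \<le> \<alpha>" and a2: "\<alpha> < 1" and b: "\<beta> = 1 - \<alpha>"
    and e: "0 \<le> \<epsilon>" "2*\<epsilon> \<le> 1"
    and q: "\<And>i. i \<in> {j..<j+m} \<Longrightarrow> \<beta> - \<epsilon> \<le> q i \<and> q i \<le> \<beta>"
  shows "0 \<le> H m q j \<and> 0 \<le> 1/\<alpha> - H m q j \<and> 1/\<alpha> - H m q j \<le> 4*\<epsilon> + 1/2^m"
  using q
proof (induction m arbitrary: j)
  case 0
  have "1/\<alpha> \<le> 2" using a1 by (simp add: divide_simps)
  moreover have "1 \<le> 1/\<alpha>" using a1 a2 by (simp add: divide_simps)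
  ultimately show ?case using e by simp
next
  case (Suc m)
  have IH: "0 \<le> H m q (Suc j) \<and> 0 \<le> 1/\<alpha> - H m q (Suc j) \<and> 1/\<alpha> - H m q (Suc j) \<le> 4*\<epsilon> + 1/2^m"
    using Suc.prems by (intro Suc.IH) auto
  have qj: "\<beta> - \<epsilon> \<le> q j" "q j \<le> \<beta>" using Suc.prems[of j] by auto
  define T where "T = H m q (Suc j)"
  define D where "D = 1/\<alpha> - T"
  have T0: "0 \<le> T" and D0: "0 \<le> D" and DB: "D \<le> 4*\<epsilon> + 1/2^m" using IH by (auto simp: T_def D_def)
  have apos: "\<alpha> > 0" using a1 by simp
  have ia: "1/\<alpha> \<le> 2" using a1 by (simp add: divide_simps)
  have key: "1/\<alpha> - (1 + q j * T) = (\<beta> - q j)/\<alpha> + q j * D"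
    using apos b by (simp add: D_def field_simps)
  have HS: "H (Suc m) q j = 1 + q j * T" by (simp add: T_def)
  show ?case
  proof (cases "q j \<ge> 0")
    case True
    have "q j * D \<le> \<beta> * D" using qj D0 by (simp add: mult_right_mono)
    moreover have "\<beta> \<le> 1/2" using b a1 by simp
    ultimately have "q j * D \<le> D/2" using D0 mult_right_mono[of \<beta> "1/2" D] by simp
    moreover have "(\<beta> - q j)/\<alpha> \<le> \<epsilon> * (1/\<alpha>)" using qj apos by (simp add: divide_simps)
    moreover have "\<epsilon> * (1/\<alpha>) \<le> \<epsilon> * 2" using mult_left_mono[OF ia e(1)] by simp
    moreover have "0 \<le> (\<beta> - q j)/\<alpha>" using qj apos by simp
    moreover have "0 \<le> q j * D" using True D0 by simp
    ultimately have k1: "(\<beta> - q j)/\<alpha> + q j * D \<le> 2*\<epsilon> + D/2" and k2: "0 \<le> (\<beta> - q j)/\<alpha> + q j * D" by linarith+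
    have "D/2 \<le> 2*\<epsilon> + (1/2^m)/2" using DB by simp
    hence k3: "(\<beta> - q j)/\<alpha> + q j * D \<le> 4*\<epsilon> + 1/2^Suc m" using k1 by simp
    have "0 \<le> 1 + q j * T" using T0 True by simp
    then show ?thesis unfolding HS key using k2 k3 by simp
  next
    case False
    have "T \<le> 1/\<alpha>" using D0 D_def by simp
    hence "T \<le> 2" using ia by simp
    have "q j * T \<ge> -\<epsilon> * T" using mult_right_mono[of "-\<epsilon>" "q j" T] qj b a2 T0 by simp
    moreover have "-\<epsilon> * T \<ge> -\<epsilon> * 2" using mult_left_mono[OF `T \<le> 2` e(1)] by simp
    ultimately have h1: "0 \<le> 1 + q j * T" using e by linarith
    have "q j * D \<le> 0" using False D0 by (simp add: mult_nonpos_nonneg)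
    moreover have "(\<beta> - q j)/\<alpha> \<le> \<epsilon> * (1/\<alpha>)" using qj apos by (simp add: divide_simps)
    moreover have "\<epsilon> * (1/\<alpha>) \<le> \<epsilon> * 2" using mult_left_mono[OF ia e(1)] by simp
    moreover have "(\<beta> - q j)/\<alpha> \<ge> 0" using qj apos by simp
    moreover have "q j * D \<ge> - \<epsilon> * D" using mult_right_mono[of "-\<epsilon>" "q j" D] qj b a2 D0 by simp
    moreover have "\<epsilon> * D \<le> (1/2) * D" using mult_right_mono[of \<epsilon> "1/2" D] e D0 by simp
    moreover have "(0::real) < 1/2^Suc m" by simp
    ultimately have k1: "(\<beta> - q j)/\<alpha> + q j * D \<le> 4*\<epsilon> + 1/2^Suc m" using e by linarith
    have "q j * T \<le> 0" using False T0 by (simp add: mult_nonpos_nonneg)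
    moreover have "1 \<le> 1/\<alpha>" using apos a2 by (simp add: divide_simps)
    ultimately have k2: "0 \<le> 1/\<alpha> - (1 + q j * T)" by linarith
    show ?thesis unfolding HS using h1 k2 k1 key by simp
  qed
qed

theorem lemma3p1:
  fixes n :: nat and \<alpha> \<beta> :: real and q :: "nat \<Rightarrow> rat"
  assumes "n \<ge> 1"
    and "1 / 2 \<le> \<alpha>" and "\<alpha> < 1"
    and "\<beta> = 1 - \<alpha>"
    and "\<And>i. i \<in> {1..n+1} \<Longrightarrow> underapprox (n + 3) (q i) \<beta>"
  shows "underapprox n (\<Sum>k = 0..n+1. \<Prod>i = 1..k. q i) (1 / \<alpha>)"
proof -
  define \<epsilon> :: real where "\<epsilon> = 1/2^(n+3)"
  have p: "(2::real) \<le> 2^(n+3)" using power_increasing[of 1 "n+3" "2::real"] by simp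
  have e: "0 \<le> \<epsilon>" "2*\<epsilon> \<le> 1" using p by (auto simp: \<epsilon>_def field_simps)
  have qq: "\<And>i. i \<in> {1..<1+(n+1)} \<Longrightarrow> \<beta> - \<epsilon> \<le> of_rat (q i) \<and> of_rat (q i) \<le> \<beta>"
    using assms(5) unfolding underapprox_def \<epsilon>_def by fastforce
  note B = H_bound[OF assms(2,3,4) e, of 1 "n+1" "\<lambda>i. of_rat (q i)", OF qq]
  have eq: "of_rat (\<Sum>k = 0..n+1. \<Prod>i = 1..k. q i) = H (n+1) (\<lambda>i. of_rat (q i)) 1"
    unfolding H_sum of_rat_sum of_rat_prod by (simp add: atLeastLessThanSuc_atLeastAtMost del: sum.atLeast0_atMost_Suc prod.op_ivl_Suc)
  have "4*\<epsilon> + 1/2^(n+1) = (1::real)/2^n" by (simp add: \<epsilon>_def field_simps power_add)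
  then show ?thesis unfolding underapprox_def eq using B by simp
qed

end
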